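(* Let $p>2$ be a prime, $d\geq 2$ an integer with $d\mid p-1$, $f=(p-1)/d$, and $\omega$ a fixed generator of $\mathbb{F}_p^*$. Let $\theta=0$ if $f$ is even and $\theta=d/2$ if $f$ is odd. Let $\zeta\in\mathbb{C}$ be a primitive $p$-th root of unity and, for $i\in\mathbb{Z}/d\mathbb{Z}$, let $\eta_i=\sum_{k=0}^{f-1}\zeta^{\omega^{kd+i}}$. For $i,j\in\mathbb{Z}/d\mathbb{Z}$ let $(i,j)=\#\{(u,v):0\leq u,v\leq f-1,\ 1+\omega^{du+i}\equiv\omega^{dv+j}\pmod p\}$. For integers $k\geq 0$ and $0\leq\nu\leq d-1$ put $n(k,\nu)=\sum_{i=0}^{d-1}\eta_i^k\,\eta_{i+\nu}$ (indices mod $d$). Then for every $0\leq\nu\leq d-1$: \[ n(1,\nu)+f=p\,\delta_{\theta\nu},\qquad n(2,\nu)+f^2=p\,(\nu,\theta), \] \[ n(3,\nu)+f^3=p\sum_{i=0}^{d-1}(\nu,i)(i,\theta)+f\,\delta_{\theta0}\,[n(1,\nu)+f], \] \[ n(4,\nu)+f^4=p\sum_{i,j=0}^{d-1}(\nu,i)(i,j)(j,\theta)+f\,\delta_{\theta0}\,[n(2,\nu)+f^2]+f\,(0,\theta)\,[n(1,\nu)+f], \] and for every $k\geq 5$, \[ n(k,\nu)+f^k=p\sum_{i_2,\dots,i_{k-1}=0}^{d-1}(\nu,i_2)(i_2,i_3)\cdots(i_{k-1},\theta)+f\,\delta_{\theta0}\,[n(k-2,\nu)+f^{k-2}]+f\,(0,\theta)\,[n(k-3,\nu)+f^{k-3}]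 \] \[ \qquad+\sum_{j=4}^{k-1}f\Big[\sum_{i_2,\dots,i_{j-2}=0}^{d-1}(0,i_2)(i_2,i_3)\cdots(i_{j-2},\theta)\Big]\,[n(k-j,\nu)+f^{k-j}], \] where $\delta$ denotes the Kronecker delta.
   Context: Indices of $\eta_i$ and of the cyclotomic numbers $(i,j)$ are taken modulo $d$. For $j=4$ the inner sum is $\sum_{i_2=0}^{d-1}(0,i_2)(i_2,\theta)$. *)

theory Defs
  imports Complex_Main "HOL-Number_Theory.Number_Theory"
begin

definition eta :: "complex \<Rightarrow> nat \<Rightarrow> nat \<Rightarrow> nat \<Rightarrow> nat \<Rightarrow> complex" where
  "eta \<zeta> \<omega> d f i = (\<Sum>k<f. \<zeta> ^ (\<omega> ^ (k * d + i mod d)))"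

definition cyc :: "nat \<Rightarrow> nat \<Rightarrow> nat \<Rightarrow> nat \<Rightarrow> nat \<Rightarrow> nat \<Rightarrow> nat" where
  "cyc p \<omega> d f i j = card {(u, v). u < f \<and> v < f \<and>
      [1 + \<omega> ^ (d * u + i mod d) = \<omega> ^ (d * v + j mod d)] (mod p)}"

definition nsum :: "complex \<Rightarrow> nat \<Rightarrow> nat \<Rightarrow> nat \<Rightarrow> nat \<Rightarrow> nat \<Rightarrow> complex" where
  "nsum \<zeta> \<omega> d f k \<nu> = (\<Sum>i<d. eta \<zeta> \<omega> d f i ^ k * eta \<zeta> \<omega> d f (i + \<nu>))"

text \<open>chain m a b = sum over m intermediate indices i_1..i_m in {0..d-1} of
  (a,i_1)(i_1,i_2)...(i_m,b); chain 0 a b = (a,b).\<close>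
fun chain :: "nat \<Rightarrow> nat \<Rightarrow> nat \<Rightarrow> nat \<Rightarrow> nat \<Rightarrow> nat \<Rightarrow> nat \<Rightarrow> nat" where
  "chain p \<omega> d f 0 a b = cyc p \<omega> d f a b"
| "chain p \<omega> d f (Suc m) a b = (\<Sum>i<d. cyc p \<omega> d f a i * chain p \<omega> d f m i b)"

definition kdelta :: "nat \<Rightarrow> nat \<Rightarrow> complex" where
  "kdelta a b = (if a = b then 1 else 0)"

end

theory Submission
  imports Defs
begin


locale gp =
  fixes p d f w th :: nat and z :: complex
  assumes prime: "prime p" and p2: "p > 2" and d2: "d \<ge> 2" and ddvd: "d dvd p - 1"
    and fdef: "f = (p - 1) div d" and ordw: "ord p w = p - 1"
    and thdef: "th = (if even f then 0 else d div 2)"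
    and zp: "z ^ p = 1" and zprim: "\<forall>k. 0 < k \<and> k < p \<longrightarrow> z ^ k \<noteq> 1"
begin

lemma pdf: "p - 1 = d * f" using ddvd fdef by auto

lemma fpos: "f \<ge> 1" using pdf p2 by (cases f) auto

lemma cop: "coprime p w"
  using ordw p2 ord_gt_0_iff[of p w] by simp

lemma wmod_eq: "w ^ a mod p = w ^ b mod p \<longleftrightarrow> [a = b] (mod (p - 1))"
  using order_divides_expdiff[OF cop, of a b] ordw by (simp add: cong_def)

lemma zmod: "z ^ n = z ^ (n mod p)"
proof -
  have "z ^ n = z ^ (p * (n div p) + n mod p)" by simp
  also have "\<dots> = (z ^ p) ^ (n div p) * z ^ (n mod p)" by (simp only: power_add power_mult)
  finally show ?thesis using zp by simp
qed

lemma wpos: "w ^ e mod p \<noteq> 0"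
proof
  assume "w ^ e mod p = 0"
  hence "p dvd w ^ e" by auto
  hence "p dvd w" using prime prime_dvd_power by blast
  hence "is_unit p" using coprime_common_divisor[OF cop dvd_refl] by blast
  thus False using prime not_prime_unit by blast
qed

definition H :: "nat \<Rightarrow> nat set" where "H r = (\<lambda>u. w ^ (d * u + r) mod p) ` {..<f}"

lemma H_char: assumes "r < d"
  shows "x \<in> H r \<longleftrightarrow> (\<exists>e. e mod d = r \<and> x = w ^ e mod p)"
proof
  assume "x \<in> H r"
  then obtain u where "x = w ^ (d * u + r) mod p" unfolding H_def by auto
  moreover have "(d * u + r) mod d = r" using assms by simp
  ultimately show "\<exists>e. e mod d = r \<and> x = w ^ e mod p" by blast
next
  assume "\<exists>e. e mod d = r \<and> x = w ^ e mod p"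
  then obtain e where e: "e mod d = r" "x = w ^ e mod p" by blast
  define e' where "e' = e mod (p - 1)"
  have "[e = e'] (mod (p - 1))" unfolding e'_def by (simp add: cong_def)
  hence x: "x = w ^ e' mod p" using e(2) wmod_eq[of e e'] by simp
  have "e' mod d = r" unfolding e'_def using e ddvd by (simp add: mod_mod_cancel)
  define u where "u = e' div d"
  have e'eq: "e' = d * u + r" unfolding u_def using mult_div_mod_eq[of d e'] \<open>e' mod d = r\<close> by simp
  have "e' < p - 1" unfolding e'_def using p2 by simp
  hence "u < f" unfolding u_def using less_mult_imp_div_less[of e' f d] pdf by (simp add: mult.commute)
  moreover have "x = w ^ (d * u + r) mod p" using x e'eq by simp
  ultimately show "x \<in> H r" unfolding H_def by blast
qed

lemma H_inj: assumes "r < d" shows "inj_on (\<lambda>u. w ^ (d * u + r) mod p) {..<f}"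
proof
  fix u v assume u: "u \<in> {..<f}" and v: "v \<in> {..<f}"
    and eq: "w ^ (d * u + r) mod p = w ^ (d * v + r) mod p"
  have lt: "d * u + r < p - 1" "d * v + r < p - 1"
  proof -
    have "d * u + r < d * u + d" using assms by simp
    also have "\<dots> = d * (u + 1)" by simp
    also have "\<dots> \<le> d * f" using u by (intro mult_le_mono2) auto
    finally show "d * u + r < p - 1" using pdf by simp
    have "d * v + r < d * v + d" using assms by simp
    also have "\<dots> = d * (v + 1)" by simp
    also have "\<dots> \<le> d * f" using v by (intro mult_le_mono2) auto
    finally show "d * v + r < p - 1" using pdf by simp
  qed
  have "[d * u + r = d * v + r] (mod (p - 1))" using eq wmod_eq by blast
  hence "d * u + r = d * v + r" using lt by (simp add: cong_def)
  thus "u = v" using d2 by simp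
qed

lemma H_card: "r < d \<Longrightarrow> card (H r) = f"
  unfolding H_def using H_inj by (simp add: card_image)

lemma H_fin: "finite (H r)" unfolding H_def by simp

lemma H_sub: "H r \<subseteq> {1..<p}"
proof
  fix x assume "x \<in> H r"
  then obtain u where x: "x = w ^ (d * u + r) mod p" unfolding H_def by blast
  have "x \<noteq> 0" using wpos x by blast
  moreover have "x < p" using x p2 by simp
  ultimately show "x \<in> {1..<p}" by simp
qed


lemma H_mult: assumes "r < d" "s < d" "x \<in> H r" "y \<in> H s"
  shows "x * y mod p \<in> H ((r + s) mod d)"
proof -
  obtain e1 where e1: "e1 mod d = r" "x = w ^ e1 mod p" using H_char assms by blast
  obtain e2 where e2: "e2 mod d = s" "y = w ^ e2 mod p" using H_char assms by blast
  have "x * y mod p = w ^ (e1 + e2) mod p" using e1 e2 by (simp add: power_add mod_mult_eq)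
  moreover have "(e1 + e2) mod d = (r + s) mod d" using mod_add_eq[of e1 d e2] e1(1) e2(1) by simp
  ultimately show ?thesis using H_char[of "(r + s) mod d"] d2 by auto
qed

lemma H_disj: assumes "r < d" "s < d" "x \<in> H r" "x \<in> H s" shows "r = s"
proof -
  obtain e1 where e1: "e1 mod d = r" "x = w ^ e1 mod p" using H_char assms by blast
  obtain e2 where e2: "e2 mod d = s" "x = w ^ e2 mod p" using H_char assms by blast
  have "w ^ e1 mod p = w ^ e2 mod p" using e1 e2 by simp
  hence "[e1 = e2] (mod (p - 1))" using wmod_eq by blast
  hence "[e1 = e2] (mod d)" using cong_dvd_modulus_nat ddvd by blast
  thus ?thesis using e1 e2 by (simp add: cong_def)
qed

lemma W_eq: "(\<lambda>e. w ^ e mod p) ` {..<p - 1} = {1..<p}"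
proof (rule card_subset_eq)
  show "finite {1..<p}" by simp
  show "(\<lambda>e. w ^ e mod p) ` {..<p - 1} \<subseteq> {1..<p}" using wpos p2 by (auto simp: Suc_le_eq)
  have "inj_on (\<lambda>e. w ^ e mod p) {..<p - 1}"
  proof
    fix a b assume "a \<in> {..<p - 1}" "b \<in> {..<p - 1}" "w ^ a mod p = w ^ b mod p"
    hence "[a = b] (mod (p - 1))" using wmod_eq by blast
    thus "a = b" using cong_less_modulus_unique_nat \<open>a \<in> {..<p - 1}\<close> \<open>b \<in> {..<p - 1}\<close> by blast
  qed
  thus "card ((\<lambda>e. w ^ e mod p) ` {..<p - 1}) = card {1..<p}" by (simp add: card_image)
qed

lemma H_cover: assumes "0 < x" "x < p" shows "\<exists>r<d. x \<in> H r"
proof -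
  have "x \<in> {1..<p}" using assms by simp
  hence "x \<in> (\<lambda>e. w ^ e mod p) ` {..<p - 1}" by (simp only: W_eq)
  then obtain e where e: "x = w ^ e mod p" by blast
  have lt: "e mod d < d" using d2 by simp
  have "x \<in> H (e mod d)" unfolding H_char[OF lt] using e by blast
  thus ?thesis using lt by blast
qed

lemma th_lt: "th < d" using thdef d2 by auto

lemma h_mod: "((p - 1) div 2) mod d = th"
proof (cases "even f")
  case True
  then obtain g where g: "f = 2 * g" by blast
  have "(p - 1) div 2 = d * g" using pdf g by simp
  thus ?thesis using thdef True by simp
next
  case False
  have "odd p" using prime_odd_nat prime p2 by blast
  hence "even (p - 1)" using p2 by (cases p) auto
  hence "even (d * f)" unfolding pdf .
  hence "even d" using False by simp
  then obtain c where c: "d = 2 * c" by blast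
  obtain g where g: "f = 2 * g + 1" using False by (metis oddE)
  have "(p - 1) div 2 = d * g + c" using pdf g c by (simp add: algebra_simps)
  moreover have "c < d" using c d2 by simp
  ultimately show ?thesis using thdef False c by simp
qed

lemma minus1: "p - 1 \<in> H th"
proof -
  define h where "h = (p - 1) div 2"
  define y where "y = w ^ h mod p"
  have y1: "y \<in> {1..<p}" using W_eq h_def y_def p2 by auto
  have "odd p" using prime_odd_nat prime p2 by blast
  hence "even (p - 1)" using p2 by (cases p) auto
  then obtain q where q: "p - 1 = 2 * q" by blast
  have hh: "p - 1 = h + h" unfolding h_def q by simp
  have "[w ^ (p - 1) = 1] (mod p)" using ord[of w p] ordw by simp
  moreover have "y * y mod p = w ^ (h + h) mod p" unfolding y_def by (simp add: power_add mod_mult_eq)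
  ultimately have "[y * y = 1] (mod p)" unfolding hh by (simp add: cong_def)
  hence "p dvd y * y - 1" using y1 cong_altdef_nat[of 1 "y * y" p] by (auto simp: Suc_le_eq)
  moreover have "y * y - 1 = (y - 1) * (y + 1)" using y1 by (cases y) auto
  ultimately have "p dvd (y - 1) * (y + 1)" by simp
  hence "p dvd (y - 1) \<or> p dvd (y + 1)" using prime_dvd_mult_iff[OF prime] by blast
  moreover have "\<not> p dvd (y - 1)"
  proof
    assume pd: "p dvd (y - 1)"
    have lt: "y - 1 < p" using y1 by auto
    have "y - 1 = 0"
    proof (rule ccontr)
      assume "y - 1 \<noteq> 0"
      hence "p \<le> y - 1" using dvd_imp_le pd by blast
      thus False using lt by simp
    qed
    hence "y = 1" using y1 by simp
    hence "[w ^ h = 1] (mod p)" unfolding y_def using p2 by (simp add: cong_def)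
    moreover have "0 < h" "h < p - 1" unfolding h_def using p2 by auto
    ultimately show False using ord_minimal[of h p w] ordw by simp
  qed
  ultimately have pd: "p dvd (y + 1)" by blast
  have "y + 1 \<le> p" using y1 by auto
  moreover have "p \<le> y + 1" using dvd_imp_le pd by simp
  ultimately have "y + 1 = p" by simp
  hence "p - 1 = w ^ h mod p" unfolding y_def by simp
  moreover have "h mod d = th" using h_mod h_def by simp
  ultimately show ?thesis unfolding H_char[OF th_lt] by blast
qed

lemma H_bij: assumes "r < d" "s < d" "x \<in> H r"
  shows "bij_betw (\<lambda>t. x * t mod p) (H s) (H ((r + s) mod d))"
proof -
  have x: "x \<in> {1..<p}" using H_sub assms by blast
  have "coprime x p"
  proof -
    have "\<not> p dvd x" using x by (auto dest: dvd_imp_le)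
    thus ?thesis using prime_imp_coprime[OF prime] coprime_commute by blast
  qed
  have inj: "inj_on (\<lambda>t. x * t mod p) (H s)"
  proof
    fix a b assume a: "a \<in> H s" and b: "b \<in> H s" and eq: "x * a mod p = x * b mod p"
    have "[a = b] (mod p)" using eq cong_mult_lcancel_nat[OF \<open>coprime x p\<close>] by (simp add: cong_def)
    moreover have "a < p" "b < p" using a b H_sub[of s] by auto
    ultimately show "a = b" using cong_less_modulus_unique_nat by blast
  qed
  have "(\<lambda>t. x * t mod p) ` H s = H ((r + s) mod d)"
  proof (rule card_subset_eq)
    show "finite (H ((r + s) mod d))" by (rule H_fin)
    show "(\<lambda>t. x * t mod p) ` H s \<subseteq> H ((r + s) mod d)" using H_mult assms by auto
    show "card ((\<lambda>t. x * t mod p) ` H s) = card (H ((r + s) mod d))"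
      using card_image[OF inj] H_card assms d2 by simp
  qed
  thus ?thesis using inj bij_betw_def by blast
qed


definition E :: "nat \<Rightarrow> complex" where "E r = (\<Sum>x\<in>H r. z ^ x)"

lemma eta_E: "eta z w d f i = E (i mod d)"
proof -
  have lt: "i mod d < d" using d2 by simp
  have "eta z w d f i = (\<Sum>k<f. z ^ (w ^ (d * k + i mod d) mod p))"
    unfolding eta_def by (intro sum.cong refl, subst zmod, simp add: mult.commute)
  also have "\<dots> = (\<Sum>x\<in>H (i mod d). z ^ x)"
    unfolding H_def using sum.reindex[OF H_inj[OF lt], of "\<lambda>x. z ^ x"] by (simp add: o_def)
  finally show ?thesis unfolding E_def .
qed

definition T :: "nat \<Rightarrow> nat \<Rightarrow> nat set" where
  "T i j = {t \<in> H i. (1 + t) mod p \<in> H j}"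

lemma cyc_H: assumes "i < d" "j < d" shows "cyc p w d f i j = card (T i j)"
proof -
  define S where "S = {(u, v). u < f \<and> v < f \<and>
      [1 + w ^ (d * u + i mod d) = w ^ (d * v + j mod d)] (mod p)}"
  define g where "g = (\<lambda>(u::nat, v::nat). w ^ (d * u + i) mod p)"
  have S: "S = {(u, v). u < f \<and> v < f \<and> (1 + w ^ (d * u + i)) mod p = w ^ (d * v + j) mod p}"
    unfolding S_def using assms by (simp add: cong_def)
  have inj: "inj_on g S"
  proof
    fix a b assume a: "a \<in> S" and b: "b \<in> S" and eq: "g a = g b"
    obtain u1 v1 where a': "a = (u1, v1)" by (cases a)
    obtain u2 v2 where b': "b = (u2, v2)" by (cases b)
    have u: "u1 < f" "u2 < f" "v1 < f" "v2 < f" using a b a' b' S by auto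
    have "w ^ (d * u1 + i) mod p = w ^ (d * u2 + i) mod p" using eq a' b' g_def by simp
    hence "u1 = u2" using H_inj[OF assms(1)] u unfolding inj_on_def by blast
    moreover have "w ^ (d * v1 + j) mod p = w ^ (d * v2 + j) mod p"
      using a b a' b' S \<open>u1 = u2\<close> by auto
    hence "v1 = v2" using H_inj[OF assms(2)] u unfolding inj_on_def by blast
    ultimately show "a = b" using a' b' by simp
  qed
  have img: "g ` S = T i j"
  proof
    show "g ` S \<subseteq> T i j"
    proof
      fix t assume "t \<in> g ` S"
      then obtain u v where uv: "(u, v) \<in> S" "t = w ^ (d * u + i) mod p" unfolding g_def by auto
      have tH: "t \<in> H i" using uv S unfolding H_def by auto
      have e1: "(1 + t) mod p = (1 + w ^ (d * u + i)) mod p" unfolding uv(2) by (rule mod_add_right_eq)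
      have e2: "(1 + w ^ (d * u + i)) mod p = w ^ (d * v + j) mod p" using uv(1) S by simp
      have "v < f" using uv(1) S by simp
      hence "(1 + t) mod p \<in> H j" using e1 e2 unfolding H_def by auto
      with tH have "t \<in> H i" "(1 + t) mod p \<in> H j" by simp_all
      thus "t \<in> T i j" unfolding T_def by simp
    qed
  next
    show "T i j \<subseteq> g ` S"
    proof
      fix t assume "t \<in> T i j"
      hence t: "t \<in> H i" "(1 + t) mod p \<in> H j" unfolding T_def by auto
      obtain u where u: "u < f" "t = w ^ (d * u + i) mod p" using t(1) unfolding H_def by auto
      obtain v where v: "v < f" "(1 + t) mod p = w ^ (d * v + j) mod p" using t(2) unfolding H_def by auto
      have "(1 + w ^ (d * u + i)) mod p = (1 + t) mod p" unfolding u(2) by (rule mod_add_right_eq[symmetric])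
      hence "(1 + w ^ (d * u + i)) mod p = w ^ (d * v + j) mod p" using v(2) by simp
      hence "(u, v) \<in> S" using u v S by simp
      thus "t \<in> g ` S" using u g_def by force
    qed
  qed
  have "cyc p w d f i j = card S" unfolding cyc_def S_def ..
  also have "\<dots> = card (g ` S)" using card_image[OF inj] by simp
  finally show ?thesis using img by simp
qed

lemma z_ne_1: "z \<noteq> 1"
proof -
  have "0 < (1::nat) \<and> 1 < p" using p2 by simp
  hence "z ^ 1 \<noteq> 1" using zprim by blast
  thus ?thesis by simp
qed

lemma sum_z: "(\<Sum>x\<in>{1..<p}. z ^ x) = -1"
proof -
  have "(\<Sum>x<p. z ^ x) = 0" using geometric_sum[OF z_ne_1, of p] zp by simp
  moreover have "(\<Sum>x<p. z ^ x) = 1 + (\<Sum>x\<in>{1..<p}. z ^ x)"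
    using sum.atLeast_Suc_lessThan[of 0 p "\<lambda>x. z ^ x"] p2 by (simp add: lessThan_atLeast0)
  ultimately have "1 + (\<Sum>x\<in>{1..<p}. z ^ x) = 0" by simp
  thus ?thesis by (simp add: eq_neg_iff_add_eq_0 add.commute)
qed

lemma H_union: "(\<Union>i\<in>{..<d}. H i) = {1..<p}"
proof
  show "(\<Union>i\<in>{..<d}. H i) \<subseteq> {1..<p}" using H_sub by blast
  show "{1..<p} \<subseteq> (\<Union>i\<in>{..<d}. H i)"
  proof
    fix x assume "x \<in> {1..<p}"
    then obtain r where "r < d" "x \<in> H r" using H_cover[of x] by auto
    thus "x \<in> (\<Union>i\<in>{..<d}. H i)" by blast
  qed
qed

lemma H_disj': "\<forall>i\<in>{..<d}. \<forall>j\<in>{..<d}. i \<noteq> j \<longrightarrow> H i \<inter> H j = {}"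
  using H_disj by blast

lemma sum_E: "(\<Sum>i<d. E i) = -1"
proof -
  have "(\<Sum>i<d. E i) = (\<Sum>x\<in>(\<Union>i\<in>{..<d}. H i). z ^ x)"
    unfolding E_def by (rule sum.UNION_disjoint[OF _ _ H_disj', symmetric]) (simp_all add: H_fin)
  thus ?thesis using H_union sum_z by simp
qed

lemma minus1_iff: "s < d \<Longrightarrow> p - 1 \<in> H s \<longleftrightarrow> s = th"
  using minus1 H_disj th_lt by blast

lemma card_T: assumes "s < d"
  shows "(\<Sum>j<d. card (T s j)) = f - (if s = th then 1 else 0)"
proof -
  have "(\<Sum>j<d. card (T s j)) = card (\<Union>j\<in>{..<d}. T s j)"
  proof (rule card_UN_disjoint[symmetric])
    show "finite {..<d}" by simp
    show "\<forall>j\<in>{..<d}. finite (T s j)" unfolding T_def using H_fin by simp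
    show "\<forall>i\<in>{..<d}. \<forall>j\<in>{..<d}. i \<noteq> j \<longrightarrow> T s i \<inter> T s j = {}"
    proof (intro ballI impI)
      fix i j assume "i \<in> {..<d}" "j \<in> {..<d}" "i \<noteq> j"
      thus "T s i \<inter> T s j = {}" unfolding T_def using H_disj[of i j] by auto
    qed
  qed
  also have "(\<Union>j\<in>{..<d}. T s j) = H s - {p - 1}"
  proof
    show "(\<Union>j\<in>{..<d}. T s j) \<subseteq> H s - {p - 1}"
    proof
      fix t assume "t \<in> (\<Union>j\<in>{..<d}. T s j)"
      then obtain j where "t \<in> H s" "(1 + t) mod p \<in> H j" unfolding T_def by auto
      moreover have "(1 + t) mod p \<noteq> 0" using calculation(2) H_sub[of j] by auto
      ultimately show "t \<in> H s - {p - 1}" using p2 by auto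
    qed
    show "H s - {p - 1} \<subseteq> (\<Union>j\<in>{..<d}. T s j)"
    proof
      fix t assume t: "t \<in> H s - {p - 1}"
      hence "t < p" using H_sub[of s] by auto
      hence "1 + t < p" using t by auto
      hence "(1 + t) mod p = 1 + t" by simp
      then obtain j where "j < d" "(1 + t) mod p \<in> H j" using H_cover[of "1 + t"] \<open>1 + t < p\<close> by auto
      thus "t \<in> (\<Union>j\<in>{..<d}. T s j)" using t unfolding T_def by auto
    qed
  qed
  also have "card (H s - {p - 1}) = card (H s) - (if p - 1 \<in> H s then 1 else 0)"
    using H_fin[of s] by (simp add: card_Diff_singleton_if)
  also have "\<dots> = f - (if s = th then 1 else 0)"
    using minus1_iff[OF assms] H_card[OF assms] by simp
  finally show ?thesis .
qed


lemma zp_mult: "z ^ (x * p) = 1"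
proof -
  have "z ^ (x * p) = z ^ (p * x)" by (simp add: mult.commute)
  also have "\<dots> = (z ^ p) ^ x" by (rule power_mult)
  finally show ?thesis using zp by simp
qed

lemma prodE: assumes a: "a < d" and s: "s < d"
  shows "E a * E ((a + s) mod d) = of_nat f * (if s = th then 1 else 0)
           + (\<Sum>j<d. of_nat (card (T s j)) * E ((a + j) mod d))"
proof -
  have "E a * E ((a + s) mod d) = (\<Sum>x\<in>H a. \<Sum>y\<in>H ((a + s) mod d). z ^ x * z ^ y)"
    unfolding E_def by (rule sum_product)
  also have "\<dots> = (\<Sum>x\<in>H a. \<Sum>t\<in>H s. z ^ (x * (1 + t)))"
  proof (rule sum.cong[OF refl])
    fix x assume x: "x \<in> H a"
    have "(\<Sum>y\<in>H ((a + s) mod d). z ^ x * z ^ y) = (\<Sum>t\<in>H s. z ^ x * z ^ (x * t mod p))"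
      using sum.reindex_bij_betw[OF H_bij[OF a s x], of "\<lambda>y. z ^ x * z ^ y"] by simp
    also have "\<dots> = (\<Sum>t\<in>H s. z ^ (x * (1 + t)))"
    proof (rule sum.cong[OF refl])
      fix t
      have "z ^ (x * t mod p) = z ^ (x * t)" using zmod[of "x * t"] by simp
      thus "z ^ x * z ^ (x * t mod p) = z ^ (x * (1 + t))" by (simp add: power_add)
    qed
    finally show "(\<Sum>y\<in>H ((a + s) mod d). z ^ x * z ^ y) = (\<Sum>t\<in>H s. z ^ (x * (1 + t)))" .
  qed
  also have "\<dots> = (\<Sum>t\<in>H s. \<Sum>x\<in>H a. z ^ (x * (1 + t)))" by (rule sum.swap)
  also have "\<dots> = (\<Sum>t\<in>H s. (if t = p - 1 then of_nat f else 0)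
      + (\<Sum>j<d. if (1 + t) mod p \<in> H j then E ((a + j) mod d) else 0))"
  proof (rule sum.cong[OF refl])
    fix t assume t: "t \<in> H s"
    have tp: "t < p" "1 \<le> t" using t H_sub[of s] by auto
    show "(\<Sum>x\<in>H a. z ^ (x * (1 + t))) = (if t = p - 1 then of_nat f else 0)
      + (\<Sum>j<d. if (1 + t) mod p \<in> H j then E ((a + j) mod d) else 0)"
    proof (cases "t = p - 1")
      case True
      hence tp1: "1 + t = p" using p2 by simp
      have "(\<Sum>x\<in>H a. z ^ (x * (1 + t))) = (\<Sum>x\<in>H a. 1)" unfolding tp1 using zp_mult by simp
      also have "\<dots> = of_nat f" using H_card[OF a] by simp
      finally have l: "(\<Sum>x\<in>H a. z ^ (x * (1 + t))) = of_nat f" .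
      have "(\<Sum>j<d. if (1 + t) mod p \<in> H j then E ((a + j) mod d) else 0) = 0"
      proof (rule sum.neutral, rule ballI)
        fix j assume "j \<in> {..<d}"
        have "0 \<notin> H j" using H_sub[of j] by auto
        thus "(if (1 + t) mod p \<in> H j then E ((a + j) mod d) else 0) = 0" using tp1 by simp
      qed
      thus ?thesis using l True by simp
    next
      case False
      hence lt: "1 + t < p" using tp by auto
      hence md: "(1 + t) mod p = 1 + t" by simp
      obtain j0 where j0: "j0 < d" "1 + t \<in> H j0" using H_cover[of "1 + t"] lt by auto
      have "(\<Sum>j<d. if (1 + t) mod p \<in> H j then E ((a + j) mod d) else 0)
          = (\<Sum>j<d. if j = j0 then E ((a + j) mod d) else 0)"
      proof (rule sum.cong[OF refl])
        fix j assume "j \<in> {..<d}"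
        hence "1 + t \<in> H j \<longleftrightarrow> j = j0" using H_disj[of j j0] j0 by auto
        thus "(if (1 + t) mod p \<in> H j then E ((a + j) mod d) else 0)
          = (if j = j0 then E ((a + j) mod d) else 0)" using md by simp
      qed
      also have "\<dots> = E ((a + j0) mod d)" using j0 by simp
      finally have r: "(\<Sum>j<d. if (1 + t) mod p \<in> H j then E ((a + j) mod d) else 0) = E ((a + j0) mod d)" .
      have "(\<Sum>x\<in>H a. z ^ (x * (1 + t))) = (\<Sum>x\<in>H a. z ^ ((1 + t) * x mod p))"
      proof (rule sum.cong[OF refl])
        fix x
        show "z ^ (x * (1 + t)) = z ^ ((1 + t) * x mod p)"
          using zmod[of "(1 + t) * x"] by (simp add: mult.commute)
      qed
      also have "\<dots> = E ((j0 + a) mod d)"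
        unfolding E_def using sum.reindex_bij_betw[OF H_bij[OF j0(1) a j0(2)], of "\<lambda>y. z ^ y"] by simp
      finally show ?thesis using r False by (simp add: add.commute)
    qed
  qed
  also have "\<dots> = (\<Sum>t\<in>H s. (if t = p - 1 then of_nat f else 0))
      + (\<Sum>t\<in>H s. \<Sum>j<d. if (1 + t) mod p \<in> H j then E ((a + j) mod d) else 0)"
    by (rule sum.distrib)
  also have "(\<Sum>t\<in>H s. (if t = p - 1 then of_nat f else 0)) = of_nat f * (if s = th then 1 else 0)"
    using H_fin[of s] minus1_iff[OF s] by simp
  also have "(\<Sum>t\<in>H s. \<Sum>j<d. if (1 + t) mod p \<in> H j then E ((a + j) mod d) else 0)
      = (\<Sum>j<d. \<Sum>t\<in>H s. if (1 + t) mod p \<in> H j then E ((a + j) mod d) else 0)"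
    by (rule sum.swap)
  also have "\<dots> = (\<Sum>j<d. of_nat (card (T s j)) * E ((a + j) mod d))"
  proof (rule sum.cong[OF refl])
    fix j
    have "(\<Sum>t\<in>H s. if (1 + t) mod p \<in> H j then E ((a + j) mod d) else 0)
        = (\<Sum>t\<in>T s j. E ((a + j) mod d))"
      unfolding T_def using sum.inter_filter[OF H_fin[of s], of "\<lambda>_. E ((a + j) mod d)"] by simp
    also have "\<dots> = of_nat (card (T s j)) * E ((a + j) mod d)" by simp
    finally show "(\<Sum>t\<in>H s. if (1 + t) mod p \<in> H j then E ((a + j) mod d) else 0)
        = of_nat (card (T s j)) * E ((a + j) mod d)" .
  qed
  finally show ?thesis .
qed

lemma prod_eta: assumes s: "s < d"
  shows "eta z w d f i * eta z w d f (i + s) = of_nat f * kdelta th s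
     + (\<Sum>j<d. of_nat (cyc p w d f s j) * eta z w d f (i + j))"
proof -
  have a: "i mod d < d" using d2 by simp
  have e1: "eta z w d f (i + s) = E ((i mod d + s) mod d)" unfolding eta_E by (simp add: mod_add_left_eq)
  have e2: "\<And>j. eta z w d f (i + j) = E ((i mod d + j) mod d)" unfolding eta_E by (simp add: mod_add_left_eq)
  have c: "\<And>j. j \<in> {..<d} \<Longrightarrow> cyc p w d f s j = card (T s j)" using cyc_H s by simp
  show ?thesis unfolding eta_E[of i] e1 e2 prodE[OF a s] kdelta_def
    using c by (simp add: eq_commute[of th s])
qed

end



fun Aseq :: "(nat \<Rightarrow> nat \<Rightarrow> complex) \<Rightarrow> (nat \<Rightarrow> complex) \<Rightarrow> nat \<Rightarrow> nat \<Rightarrow> nat \<Rightarrow> complex" where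
  "Aseq M e d 0 v = e v"
| "Aseq M e d (Suc r) v = (\<Sum>j<d. M v j * Aseq M e d r j)"

lemma solve:
  fixes m M :: "nat \<Rightarrow> nat \<Rightarrow> complex" and e :: "nat \<Rightarrow> complex" and P F :: complex and d :: nat
  assumes d: "0 < d"
    and m0: "\<And>v. v < d \<Longrightarrow> m 0 v = 0"
    and m1: "\<And>v. v < d \<Longrightarrow> m 1 v = P * e v"
    and mr: "\<And>k v. v < d \<Longrightarrow> m (k + 2) v = F * e v * m k 0 + (\<Sum>j<d. M v j * m (k + 1) j)"
  shows "\<forall>v<d. m (n + 1) v = P * Aseq M e d n v + F * (\<Sum>i<n. Aseq M e d i 0 * m (n - 1 - i) v)"
proof (induction n rule: less_induct)
  case (less n)
  let ?A = "Aseq M e d"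
  show ?case
  proof (cases n)
    case 0
    thus ?thesis using m1 by simp
  next
    case (Suc n1)
    show ?thesis
    proof (cases n1)
      case 0
      show ?thesis
      proof (intro allI impI)
        fix v assume v: "v < d"
        have "m 2 v = F * e v * m 0 0 + (\<Sum>j<d. M v j * m 1 j)" using mr[of v 0] v by (simp add: numeral_2_eq_2)
        also have "\<dots> = (\<Sum>j<d. M v j * (P * e j))" using m0 d m1 by simp
        also have "\<dots> = P * ?A 1 v" by (simp add: sum_distrib_left mult_ac)
        finally show "m (n + 1) v = P * ?A n v + F * (\<Sum>i<n. ?A i 0 * m (n - 1 - i) v)"
          using Suc 0 m0 v by (simp add: numeral_2_eq_2)
      qed
    next
      case (Suc q)
      have n: "n = q + 2" using \<open>n = Suc n1\<close> Suc by simp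
      have IH1: "\<forall>v<d. m (q + 2) v = P * ?A (q + 1) v + F * (\<Sum>i<q + 1. ?A i 0 * m (q - i) v)"
        using less.IH[of "q + 1"] n by simp
      have IH0: "m (q + 1) 0 = P * ?A q 0 + F * (\<Sum>i<q. ?A i 0 * m (q - 1 - i) 0)"
        using less.IH[of q] n d by simp
      show ?thesis
      proof (intro allI impI)
        fix v assume v: "v < d"
        define X where "X i = (\<Sum>j<d. M v j * m (q - i) j)" for i
        define Y where "Y i = (if i = q then P * e v else F * e v * m (q - 1 - i) 0)" for i
        have XY: "m (q + 1 - i) v = X i + Y i" if "i < q + 1" for i
        proof (cases "i = q")
          case True
          have "X i = 0" unfolding X_def using True m0 by simp
          thus ?thesis using True m1 v Y_def by simp
        next
          case False
          hence "q + 1 - i = (q - 1 - i) + 2" "q - 1 - i + 1 = q - i" using that by auto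
          thus ?thesis using mr[OF v, of "q - 1 - i"] False unfolding X_def Y_def by simp
        qed
        have sY: "(\<Sum>i<q + 1. ?A i 0 * Y i) = e v * m (q + 1) 0"
        proof -
          have "(\<Sum>i<q + 1. ?A i 0 * Y i) = (\<Sum>i<q. ?A i 0 * Y i) + ?A q 0 * Y q" by simp
          also have "(\<Sum>i<q. ?A i 0 * Y i) = (\<Sum>i<q. ?A i 0 * (F * e v * m (q - 1 - i) 0))"
            unfolding Y_def by (intro sum.cong refl) simp
          also have "\<dots> = e v * (F * (\<Sum>i<q. ?A i 0 * m (q - 1 - i) 0))"
            by (simp add: sum_distrib_left mult_ac)
          finally show ?thesis unfolding IH0 Y_def by (simp add: algebra_simps)
        qed
        have lhs: "(\<Sum>i<q + 2. ?A i 0 * m (q + 2 - 1 - i) v) = (\<Sum>i<q + 1. ?A i 0 * X i) + e v * m (q + 1) 0"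
        proof -
          have "(\<Sum>i<q + 2. ?A i 0 * m (q + 2 - 1 - i) v) = (\<Sum>i<q + 1. ?A i 0 * m (q + 1 - i) v) + ?A (q + 1) 0 * m 0 v"
            by (simp add: numeral_2_eq_2)
          also have "?A (q + 1) 0 * m 0 v = 0" using m0 v by simp
          also have "(\<Sum>i<q + 1. ?A i 0 * m (q + 1 - i) v) = (\<Sum>i<q + 1. ?A i 0 * X i + ?A i 0 * Y i)"
            using XY by (intro sum.cong refl) (simp add: distrib_left)
          also have "\<dots> = (\<Sum>i<q + 1. ?A i 0 * X i) + (\<Sum>i<q + 1. ?A i 0 * Y i)" by (rule sum.distrib)
          finally show ?thesis using sY by simp
        qed
        have "(\<Sum>j<d. M v j * m (q + 2) j) = (\<Sum>j<d. M v j * (P * ?A (q + 1) j + F * (\<Sum>i<q + 1. ?A i 0 * m (q - i) j)))"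
          using IH1 by (intro sum.cong refl) simp
        also have "\<dots> = (\<Sum>j<d. P * (M v j * ?A (q + 1) j) + F * (\<Sum>i<q + 1. M v j * (?A i 0 * m (q - i) j)))"
          by (intro sum.cong refl) (simp add: distrib_left sum_distrib_left mult_ac)
        also have "\<dots> = P * (\<Sum>j<d. M v j * ?A (q + 1) j) + F * (\<Sum>j<d. \<Sum>i<q + 1. M v j * (?A i 0 * m (q - i) j))"
          by (subst sum.distrib) (simp only: sum_distrib_left)
        also have "(\<Sum>j<d. \<Sum>i<q + 1. M v j * (?A i 0 * m (q - i) j)) = (\<Sum>i<q + 1. \<Sum>j<d. M v j * (?A i 0 * m (q - i) j))"
          by (rule sum.swap)
        also have "\<dots> = (\<Sum>i<q + 1. ?A i 0 * X i)"
          unfolding X_def by (intro sum.cong refl) (simp add: sum_distrib_left mult_ac)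
        also have "(\<Sum>j<d. M v j * ?A (q + 1) j) = ?A (q + 2) v" by (simp add: numeral_2_eq_2)
        finally have rs: "(\<Sum>j<d. M v j * m (q + 2) j) = P * ?A (q + 2) v + F * (\<Sum>i<q + 1. ?A i 0 * X i)" .
        have "m (q + 3) v = F * e v * m (q + 1) 0 + (\<Sum>j<d. M v j * m (q + 2) j)"
          using mr[OF v, of "q + 1"] by (simp add: numeral_3_eq_3 numeral_2_eq_2)
        also have "\<dots> = P * ?A (q + 2) v + F * (\<Sum>i<q + 2. ?A i 0 * m (q + 2 - 1 - i) v)"
          unfolding rs lhs by (simp add: algebra_simps)
        finally show "m (n + 1) v = P * ?A n v + F * (\<Sum>i<n. ?A i 0 * m (n - 1 - i) v)"
          using n by (simp add: numeral_3_eq_3 numeral_2_eq_2)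
      qed
    qed
  qed
qed




lemma shift_sum: assumes "0 < (d::nat)" shows "(\<Sum>i<d. g ((i + v) mod d)) = (\<Sum>i<d. g i)"
proof -
  have inj: "inj_on (\<lambda>i. (i + v) mod d) {..<d}"
  proof
    fix a b assume a: "a \<in> {..<d}" and b: "b \<in> {..<d}" and eq: "(a + v) mod d = (b + v) mod d"
    have "[a + v = b + v] (mod d)" using eq by (simp add: cong_def)
    hence "[a = b] (mod d)" by (simp add: cong_add_rcancel_nat)
    thus "a = b" using a b cong_less_modulus_unique_nat by auto
  qed
  have "(\<lambda>i. (i + v) mod d) ` {..<d} = {..<d}"
    by (rule endo_inj_surj) (use inj assms in auto)
  hence "bij_betw (\<lambda>i. (i + v) mod d) {..<d} {..<d}" using inj bij_betw_def by blast
  thus ?thesis by (rule sum.reindex_bij_betw)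
qed

context gp begin

lemma sum_eta_shift: "(\<Sum>i<d. eta z w d f (i + v)) = -1"
proof -
  have "(\<Sum>i<d. eta z w d f (i + v)) = (\<Sum>i<d. E ((i + v) mod d))" unfolding eta_E ..
  also have "\<dots> = (\<Sum>i<d. E i)" using shift_sum[of d E v] d2 by simp
  finally show ?thesis using sum_E by simp
qed

lemma sumC: assumes "v < d"
  shows "(\<Sum>j<d. of_nat (cyc p w d f v j) :: complex) = of_nat f - kdelta th v"
proof -
  have "(\<Sum>j<d. of_nat (cyc p w d f v j) :: complex) = of_nat (\<Sum>j<d. card (T v j))"
    using cyc_H assms by simp
  also have "\<dots> = of_nat (f - (if v = th then 1 else 0))" using card_T[OF assms] by simp
  also have "\<dots> = of_nat f - kdelta th v" using fpos unfolding kdelta_def by (auto simp: of_nat_diff)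
  finally show ?thesis .
qed

lemma N_rec: assumes v: "v < d"
  shows "nsum z w d f (Suc k) v = of_nat f * kdelta th v * (\<Sum>i<d. eta z w d f i ^ k)
     + (\<Sum>j<d. of_nat (cyc p w d f v j) * nsum z w d f k j)"
proof -
  let ?e = "eta z w d f"
  have "nsum z w d f (Suc k) v = (\<Sum>i<d. ?e i ^ k * (?e i * ?e (i + v)))"
    unfolding nsum_def by (simp add: mult_ac)
  also have "\<dots> = (\<Sum>i<d. of_nat f * kdelta th v * ?e i ^ k
      + (\<Sum>j<d. of_nat (cyc p w d f v j) * (?e i ^ k * ?e (i + j))))"
    unfolding prod_eta[OF v] by (intro sum.cong refl) (simp add: distrib_left sum_distrib_left mult_ac)
  also have "\<dots> = of_nat f * kdelta th v * (\<Sum>i<d. ?e i ^ k)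
      + (\<Sum>i<d. \<Sum>j<d. of_nat (cyc p w d f v j) * (?e i ^ k * ?e (i + j)))"
    by (subst sum.distrib) (simp only: sum_distrib_left)
  also have "(\<Sum>i<d. \<Sum>j<d. of_nat (cyc p w d f v j) * (?e i ^ k * ?e (i + j)))
      = (\<Sum>j<d. \<Sum>i<d. of_nat (cyc p w d f v j) * (?e i ^ k * ?e (i + j)))" by (rule sum.swap)
  also have "\<dots> = (\<Sum>j<d. of_nat (cyc p w d f v j) * nsum z w d f k j)"
    unfolding nsum_def by (simp only: sum_distrib_left)
  finally show ?thesis .
qed

lemma pow_sum: "(\<Sum>i<d. eta z w d f i ^ Suc k) = nsum z w d f k 0"
  unfolding nsum_def by (simp add: mult_ac)

definition mm where "mm k v = nsum z w d f k v + of_nat f ^ k"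

lemma M0: "mm 0 v = 0"
  unfolding mm_def nsum_def using sum_eta_shift[of v] by simp

lemma pd1: "(of_nat p :: complex) = of_nat d * of_nat f + 1"
proof -
  have "p = d * f + 1" using pdf p2 by simp
  thus ?thesis by simp
qed

lemma M1: assumes v: "v < d" shows "mm 1 v = of_nat p * kdelta th v"
proof -
  have "nsum z w d f 1 v = of_nat f * kdelta th v * of_nat d
     + (\<Sum>j<d. of_nat (cyc p w d f v j) * nsum z w d f 0 j)"
    using N_rec[OF v, of 0] by simp
  also have "(\<Sum>j<d. of_nat (cyc p w d f v j) * nsum z w d f 0 j) = - (\<Sum>j<d. of_nat (cyc p w d f v j))"
    unfolding nsum_def using sum_eta_shift by (simp add: sum_negf)
  finally have "nsum z w d f 1 v = of_nat f * kdelta th v * of_nat d - (of_nat f - kdelta th v)"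
    using sumC[OF v] by simp
  thus ?thesis unfolding mm_def pd1 by (simp add: algebra_simps)
qed

lemma MR: assumes v: "v < d"
  shows "mm (k + 2) v = of_nat f * kdelta th v * mm k 0 + (\<Sum>j<d. of_nat (cyc p w d f v j) * mm (k + 1) j)"
proof -
  let ?C = "\<lambda>j. of_nat (cyc p w d f v j) :: complex"
  let ?F = "of_nat f :: complex"
  have "nsum z w d f (k + 2) v = ?F * kdelta th v * nsum z w d f k 0 + (\<Sum>j<d. ?C j * nsum z w d f (k + 1) j)"
    using N_rec[OF v, of "k + 1"] pow_sum[of k] by (simp add: numeral_2_eq_2)
  moreover have "(\<Sum>j<d. ?C j * nsum z w d f (k + 1) j) = (\<Sum>j<d. ?C j * mm (k + 1) j) - (\<Sum>j<d. ?C j) * ?F ^ (k + 1)"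
  proof -
    have "(\<Sum>j<d. ?C j * nsum z w d f (k + 1) j) = (\<Sum>j<d. ?C j * mm (k + 1) j - ?C j * ?F ^ (k + 1))"
      unfolding mm_def by (intro sum.cong refl) (simp add: algebra_simps)
    also have "\<dots> = (\<Sum>j<d. ?C j * mm (k + 1) j) - (\<Sum>j<d. ?C j * ?F ^ (k + 1))"
      by (rule sum_subtractf)
    also have "(\<Sum>j<d. ?C j * ?F ^ (k + 1)) = (\<Sum>j<d. ?C j) * ?F ^ (k + 1)"
      by (rule sum_distrib_right[symmetric])
    finally show ?thesis .
  qed
  ultimately show ?thesis unfolding mm_def sumC[OF v] by (simp add: algebra_simps power_Suc numeral_2_eq_2)
qed

end



context gp begin

abbreviation "Cm \<equiv> (\<lambda>i j. of_nat (cyc p w d f i j) :: complex)"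
abbreviation "Ak \<equiv> Aseq Cm (kdelta th) d"

lemma main_G: "\<forall>v<d. mm (n + 1) v = of_nat p * Ak n v + of_nat f * (\<Sum>i<n. Ak i 0 * mm (n - 1 - i) v)"
  by (rule solve) (use d2 M0 M1 MR in auto)

lemma Ak_chain: "Ak (Suc r) v = of_nat (chain p w d f r v th)"
proof (induction r arbitrary: v)
  case 0
  have "Ak 1 v = (\<Sum>j<d. Cm v j * (if th = j then 1 else 0))" by (simp add: kdelta_def)
  also have "\<dots> = (\<Sum>j<d. if th = j then Cm v j else 0)" by (intro sum.cong refl) simp
  also have "\<dots> = Cm v th" using th_lt by simp
  finally show ?case by simp
next
  case (Suc r)
  thus ?case by simp
qed

lemma Ak0: "Ak 0 v = kdelta th v" by simp

end

theorem lemma2: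
  fixes p d f \<omega> \<theta> :: nat and \<zeta> :: complex
  assumes "prime p" and "p > 2" and "d \<ge> 2" and "d dvd p - 1"
    and "f = (p - 1) div d"
    and "ord p \<omega> = p - 1"
    and "\<theta> = (if even f then 0 else d div 2)"
    and "\<zeta> ^ p = 1" and "\<forall>k. 0 < k \<and> k < p \<longrightarrow> \<zeta> ^ k \<noteq> 1"
  shows "\<forall>\<nu><d.
    let n = (\<lambda>k. nsum \<zeta> \<omega> d f k \<nu>);
        C = (\<lambda>i j. of_nat (cyc p \<omega> d f i j) :: complex);
        F = (of_nat f :: complex);
        P = (of_nat p :: complex)
    in n 1 + F = P * kdelta \<theta> \<nu>
     \<and> n 2 + F ^ 2 = P * C \<nu> \<theta>
     \<and> n 3 + F ^ 3 = P * (\<Sum>i<d. C \<nu> i * C i \<theta>) + F * kdelta \<theta> 0 * (n 1 + F)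
     \<and> n 4 + F ^ 4 = P * (\<Sum>i<d. \<Sum>j<d. C \<nu> i * C i j * C j \<theta>)
                      + F * kdelta \<theta> 0 * (n 2 + F ^ 2) + F * C 0 \<theta> * (n 1 + F)
     \<and> (\<forall>k\<ge>5. n k + F ^ k =
            P * of_nat (chain p \<omega> d f (k - 2) \<nu> \<theta>)
          + F * kdelta \<theta> 0 * (n (k - 2) + F ^ (k - 2))
          + F * C 0 \<theta> * (n (k - 3) + F ^ (k - 3))
          + (\<Sum>j=4..k-1. F * of_nat (chain p \<omega> d f (j - 3) 0 \<theta>) * (n (k - j) + F ^ (k - j))))"
proof -
  interpret G: gp p d f \<omega> \<theta> \<zeta> using assms by unfold_locales auto
  let ?m = "G.mm"
  let ?C = "\<lambda>i j. of_nat (cyc p \<omega> d f i j) :: complex"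
  let ?F = "of_nat f :: complex"
  let ?P = "of_nat p :: complex"
  let ?A = "Aseq ?C (kdelta \<theta>) d"
  have mmd: "\<And>k v. nsum \<zeta> \<omega> d f k v + ?F ^ k = ?m k v" unfolding G.mm_def by simp
  have A1: "\<And>v. ?A 1 v = ?C v \<theta>" using G.Ak_chain[of 0] by simp
  have A2: "\<And>v. ?A 2 v = (\<Sum>i<d. ?C v i * ?C i \<theta>)"
    using G.Ak_chain[of 1] by (simp add: numeral_2_eq_2)
  have A3: "\<And>v. ?A 3 v = (\<Sum>i<d. \<Sum>j<d. ?C v i * ?C i j * ?C j \<theta>)"
    using G.Ak_chain[of 2] by (simp add: numeral_3_eq_3 numeral_2_eq_2 sum_distrib_left mult_ac)
  show ?thesis
  proof (intro allI impI)
    fix v assume v: "v < d"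
    have G: "\<And>n. ?m (n + 1) v = ?P * ?A n v + ?F * (\<Sum>i<n. ?A i 0 * ?m (n - 1 - i) v)"
      using G.main_G v by blast
    have m0: "?m 0 v = 0" by (rule G.M0)
    have c1: "?m 1 v = ?P * kdelta \<theta> v" by (rule G.M1[OF v])
    have c2: "?m 2 v = ?P * ?C v \<theta>"
      using G[of 1] A1 m0 by (simp add: numeral_2_eq_2)
    have c3: "?m 3 v = ?P * (\<Sum>i<d. ?C v i * ?C i \<theta>) + ?F * kdelta \<theta> 0 * ?m 1 v"
      using G[of 2] A2 m0 by (simp add: numeral_2_eq_2 numeral_3_eq_3 mult_ac)
    have c4: "?m 4 v = ?P * (\<Sum>i<d. \<Sum>j<d. ?C v i * ?C i j * ?C j \<theta>)
                      + ?F * kdelta \<theta> 0 * ?m 2 v + ?F * ?C 0 \<theta> * ?m 1 v"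
    proof -
      have "?m 4 v = ?P * ?A 3 v + ?F * (\<Sum>i<3. ?A i 0 * ?m (3 - 1 - i) v)"
        using G[of 3] by simp
      also have "(\<Sum>i<3. ?A i 0 * ?m (3 - 1 - i) v) = ?A 0 0 * ?m 2 v + ?A 1 0 * ?m 1 v + ?A 2 0 * ?m 0 v"
        by (simp add: numeral_3_eq_3 numeral_2_eq_2)
      finally show ?thesis using A1 A3 m0 by (simp add: algebra_simps)
    qed
    have c5: "?m k v = ?P * of_nat (chain p \<omega> d f (k - 2) v \<theta>)
          + ?F * kdelta \<theta> 0 * ?m (k - 2) v
          + ?F * ?C 0 \<theta> * ?m (k - 3) v
          + (\<Sum>j=4..k-1. ?F * of_nat (chain p \<omega> d f (j - 3) 0 \<theta>) * ?m (k - j) v)" if k: "k \<ge> 5" for k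
    proof -
      obtain q where q: "k = q + 5" using k by (metis add.commute le_Suc_ex)
      define g where "g i = ?A i 0 * ?m (q + 3 - i) v" for i
      have "?m k v = ?P * ?A (q + 4) v + ?F * (\<Sum>i<q + 4. g i)"
        using G[of "q + 4"] q unfolding g_def by (simp add: numeral_eq_Suc)
      also have "(\<Sum>i<q + 4. g i) = g 0 + g 1 + (\<Sum>i<q + 1. g (i + 2)) + g (q + 3)"
      proof -
        have "(\<Sum>i<q + 4. g i) = g 0 + (\<Sum>i<q + 3. g (Suc i))"
          using sum.lessThan_Suc_shift[of g "q + 3"] by (simp add: numeral_eq_Suc)
        also have "(\<Sum>i<q + 3. g (Suc i)) = g 1 + (\<Sum>i<q + 2. g (Suc (Suc i)))"
          using sum.lessThan_Suc_shift[of "\<lambda>i. g (Suc i)" "q + 2"] by (simp add: numeral_eq_Suc)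
        also have "(\<Sum>i<q + 2. g (Suc (Suc i))) = (\<Sum>i<q + 1. g (i + 2)) + g (q + 3)"
          by (simp add: numeral_eq_Suc)
        finally show ?thesis by (simp add: add.assoc)
      qed
      also have "g (q + 3) = 0" unfolding g_def using m0 by simp
      also have "(\<Sum>j=4..k-1. ?F * of_nat (chain p \<omega> d f (j - 3) 0 \<theta>) * ?m (k - j) v)
          = (\<Sum>i<q + 1. ?F * g (i + 2))"
      proof -
        have "(\<Sum>j=4..k-1. ?F * of_nat (chain p \<omega> d f (j - 3) 0 \<theta>) * ?m (k - j) v)
           = (\<Sum>j=0+4..q+4. ?F * of_nat (chain p \<omega> d f (j - 3) 0 \<theta>) * ?m (q + 5 - j) v)"
          using q by (simp add: add.commute)
        also have "\<dots> = (\<Sum>i=0..q. ?F * of_nat (chain p \<omega> d f (i + 4 - 3) 0 \<theta>) * ?m (q + 5 - (i + 4)) v)"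
          by (rule sum.shift_bounds_cl_nat_ivl)
        also have "\<dots> = (\<Sum>i<q + 1. ?F * g (i + 2))"
        proof -
          have iv: "{0..q} = {..<q + 1}" by auto
          have eqi: "\<And>i. ?F * of_nat (chain p \<omega> d f (i + 4 - 3) 0 \<theta>) * ?m (q + 5 - (i + 4)) v = ?F * g (i + 2)"
          proof -
            fix i
            have "i + 4 - 3 = Suc i" "q + 5 - (i + 4) = q + 3 - (i + 2)" "i + 2 = Suc (Suc i)" by auto
            thus "?F * of_nat (chain p \<omega> d f (i + 4 - 3) 0 \<theta>) * ?m (q + 5 - (i + 4)) v = ?F * g (i + 2)"
              unfolding g_def using G.Ak_chain[of "Suc i" 0] by simp
          qed
          show ?thesis unfolding iv by (intro sum.cong refl) (rule eqi)
        qed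
        finally show ?thesis .
      qed
      moreover have "g 0 = kdelta \<theta> 0 * ?m (k - 2) v" unfolding g_def using q by (simp add: numeral_eq_Suc)
      moreover have "g 1 = ?C 0 \<theta> * ?m (k - 3) v" unfolding g_def using q A1 by (simp add: numeral_eq_Suc)
      moreover have "?A (q + 4) v = of_nat (chain p \<omega> d f (k - 2) v \<theta>)"
        using G.Ak_chain[of "q + 3" v] q by (simp add: numeral_eq_Suc)
      ultimately show ?thesis by (simp add: algebra_simps sum_distrib_left)
    qed
    show "let n = (\<lambda>k. nsum \<zeta> \<omega> d f k v);
        C = (\<lambda>i j. of_nat (cyc p \<omega> d f i j) :: complex);
        F = (of_nat f :: complex);
        P = (of_nat p :: complex)
    in n 1 + F = P * kdelta \<theta> v
     \<and> n 2 + F ^ 2 = P * C v \<theta>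
     \<and> n 3 + F ^ 3 = P * (\<Sum>i<d. C v i * C i \<theta>) + F * kdelta \<theta> 0 * (n 1 + F)
     \<and> n 4 + F ^ 4 = P * (\<Sum>i<d. \<Sum>j<d. C v i * C i j * C j \<theta>)
                      + F * kdelta \<theta> 0 * (n 2 + F ^ 2) + F * C 0 \<theta> * (n 1 + F)
     \<and> (\<forall>k\<ge>5. n k + F ^ k =
            P * of_nat (chain p \<omega> d f (k - 2) v \<theta>)
          + F * kdelta \<theta> 0 * (n (k - 2) + F ^ (k - 2))
          + F * C 0 \<theta> * (n (k - 3) + F ^ (k - 3))
          + (\<Sum>j=4..k-1. F * of_nat (chain p \<omega> d f (j - 3) 0 \<theta>) * (n (k - j) + F ^ (k - j))))"
      unfolding Let_def
    proof (intro conjI allI impI)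
      show "nsum \<zeta> \<omega> d f 1 v + ?F = ?P * kdelta \<theta> v" using c1 mmd[of 1] by simp
      show "nsum \<zeta> \<omega> d f 2 v + ?F ^ 2 = ?P * ?C v \<theta>" using c2 mmd[of 2] by simp
      show "nsum \<zeta> \<omega> d f 3 v + ?F ^ 3 = ?P * (\<Sum>i<d. ?C v i * ?C i \<theta>) + ?F * kdelta \<theta> 0 * (nsum \<zeta> \<omega> d f 1 v + ?F)"
        using c3 mmd[of 3] mmd[of 1] by simp
      show "nsum \<zeta> \<omega> d f 4 v + ?F ^ 4 = ?P * (\<Sum>i<d. \<Sum>j<d. ?C v i * ?C i j * ?C j \<theta>)
                      + ?F * kdelta \<theta> 0 * (nsum \<zeta> \<omega> d f 2 v + ?F ^ 2) + ?F * ?C 0 \<theta> * (nsum \<zeta> \<omega> d f 1 v + ?F)"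
        using c4 mmd[of 4] mmd[of 2] mmd[of 1] by simp
      fix k :: nat assume k: "5 \<le> k"
      show "nsum \<zeta> \<omega> d f k v + ?F ^ k =
            ?P * of_nat (chain p \<omega> d f (k - 2) v \<theta>)
          + ?F * kdelta \<theta> 0 * (nsum \<zeta> \<omega> d f (k - 2) v + ?F ^ (k - 2))
          + ?F * ?C 0 \<theta> * (nsum \<zeta> \<omega> d f (k - 3) v + ?F ^ (k - 3))
          + (\<Sum>j=4..k-1. ?F * of_nat (chain p \<omega> d f (j - 3) 0 \<theta>) * (nsum \<zeta> \<omega> d f (k - j) v + ?F ^ (k - j)))"
        unfolding mmd using c5[OF k] .
    qed
  qed
qed


end
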